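(* Let $k>1$ be an integer and let $\mathcal A_k$ be the pattern of $k$-term arithmetic progressions in $\mathbb R$. If $n$ is a positive integer and $r$ is the remainder when $n$ is divided by $k-1$, then \[ S_{\mathcal A_k}(n) = \frac{(n-r)(n+r-k+1)}{2k-2}. \]
   Context: $\mathcal A_k$ is the set of all subsets of $\mathbb R$ of the form $\{a, a+d, a+2d,\dots,a+(k-1)d\}$ with $a\in\mathbb R$, $d>0$. For finite $V\subseteq\mathbb R$, $S_{\mathcal A_k}(V)$ is the number of $P\in\mathcal A_k$ with $P\subseteq V$, and $S_{\mathcal A_k}(n)=\max\{S_{\mathcal A_k}(V): V\subseteq\mathbb R,\ |V|=n\}$. *)

theory Defs
  imports Complex_Main
begin

definition AP_pattern :: "nat \<Rightarrow> real set set" where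
  "AP_pattern k = {{a + real i * d | i. i < k} | a d. d > 0}"

definition S_AP_set :: "nat \<Rightarrow> real set \<Rightarrow> nat" where
  "S_AP_set k V = card {P \<in> AP_pattern k. P \<subseteq> V}"

definition S_AP :: "nat \<Rightarrow> nat \<Rightarrow> nat" where
  "S_AP k n = Max {S_AP_set k V | V. finite V \<and> card V = n}"

end

theory Submission
  imports Defs
begin

definition APs :: "real \<Rightarrow> real \<Rightarrow> nat \<Rightarrow> real set" where
  "APs a d k = {a + real i * d | i. i < k}"

definition R :: "nat \<Rightarrow> real set \<Rightarrow> (real \<times> real) set" where
  "R k V = {(a,d). d > 0 \<and> APs a d k \<subseteq> V}"

lemma APs_mem: "i < k \<Longrightarrow> a + real i * d \<in> APs a d k"
  unfolding APs_def by blast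

lemma AP_inj:
  assumes "2 \<le> k" "0 < d" "0 < d'" "APs a d k = APs a' d' k"
  shows "a = a' \<and> d = d'"
proof -
  have "a \<in> APs a' d' k" using assms APs_mem[of 0 k a d] by simp
  then obtain i where "a = a' + real i * d'" unfolding APs_def by auto
  then have 1: "a' \<le> a" using assms by simp
  have "a' \<in> APs a d k" using assms APs_mem[of 0 k a' d'] by simp
  then obtain i where "a' = a + real i * d" unfolding APs_def by auto
  then have 2: "a \<le> a'" using assms by simp
  from 1 2 have aa: "a = a'" by simp
  have "a + d \<in> APs a' d' k" using assms APs_mem[of 1 k a d] by simp
  then obtain j where j: "a + d = a' + real j * d'" unfolding APs_def by auto
  have "j \<noteq> 0" proof assume "j = 0" then have "d = 0" using j aa by simp with assms show False by simp qed
  then have "real j \<ge> 1" by simp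
  moreover have "d = real j * d'" using j aa by simp
  ultimately have 3: "d' \<le> d" using assms by (simp add: mult_le_cancel_right1)
  have "a' + d' \<in> APs a d k" using assms APs_mem[of 1 k a' d'] by simp
  then obtain j where j: "a' + d' = a + real j * d" unfolding APs_def by auto
  have "j \<noteq> 0" proof assume "j = 0" then have "d' = 0" using j aa by simp with assms show False by simp qed
  then have "real j \<ge> 1" by simp
  moreover have "d' = real j * d" using j aa by simp
  ultimately have 4: "d \<le> d'" using assms by (simp add: mult_le_cancel_right1)
  from aa 3 4 show ?thesis by simp
qed

lemma S_AP_set_eq: assumes "2 \<le> k" shows "S_AP_set k V = card (R k V)"
proof -
  have "{P \<in> AP_pattern k. P \<subseteq> V} = (\<lambda>(a,d). APs a d k) ` R k V"
    unfolding AP_pattern_def R_def APs_def by auto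
  moreover have "inj_on (\<lambda>(a,d). APs a d k) (R k V)"
    using AP_inj[OF assms] unfolding inj_on_def R_def by auto
  ultimately show ?thesis unfolding S_AP_set_def by (simp add: card_image)
qed

lemma R_finite: assumes "2 \<le> k" "finite V" shows "finite (R k V)"
proof -
  have "R k V \<subseteq> (\<lambda>(x,y). (x, y - x)) ` (V \<times> V)"
  proof
    fix p assume p: "p \<in> R k V"
    obtain a d where pd: "p = (a,d)" by (cases p)
    have "a \<in> V" "a + d \<in> V" using p pd APs_mem[of 0 k a d] APs_mem[of 1 k a d] assms
      unfolding R_def by auto
    then show "p \<in> (\<lambda>(x,y). (x, y - x)) ` (V \<times> V)" using pd by (auto intro!: image_eqI[of _ _ "(a, a+d)"])
  qed
  then show ?thesis using assms by (meson finite_SigmaI finite_imageI finite_subset)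
qed

lemma down_closed:
  fixes V :: "real set"
  shows "finite V \<Longrightarrow> b \<le> card V \<Longrightarrow> \<exists>B\<subseteq>V. card B = b \<and> (\<forall>x\<in>B. \<forall>y\<in>V. y \<le> x \<longrightarrow> y \<in> B)"
proof (induction "card V" arbitrary: V)
  case 0
  then show ?case by (intro exI[of _ "{}"]) auto
next
  case (Suc n)
  show ?case
  proof (cases "b = card V")
    case True then show ?thesis by (intro exI[of _ V]) auto
  next
    case False
    have ne: "V \<noteq> {}" using Suc by auto
    define V' where "V' = V - {Max V}"
    have MV: "Max V \<in> V" using Suc.prems ne by simp
    have cV': "card V' = n" using Suc MV unfolding V'_def by simp
    have fV': "finite V'" using Suc unfolding V'_def by simp
    have "b \<le> card V'" using Suc.prems False cV' Suc.hyps by simp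
    then obtain B where B: "B \<subseteq> V'" "card B = b" "\<forall>x\<in>B. \<forall>y\<in>V'. y \<le> x \<longrightarrow> y \<in> B"
      using Suc.hyps(1)[OF cV'[symmetric] fV'] by blast
    have "\<forall>x\<in>B. \<forall>y\<in>V. y \<le> x \<longrightarrow> y \<in> B"
    proof (intro ballI impI)
      fix x y assume x: "x \<in> B" and y: "y \<in> V" and yx: "y \<le> x"
      have xV: "x \<in> V" "x \<noteq> Max V" using x B unfolding V'_def by auto
      have "x \<le> Max V" using xV Suc.prems by simp
      then have "y \<noteq> Max V" using yx xV by auto
      then have "y \<in> V'" using y unfolding V'_def by simp
      then show "y \<in> B" using B x yx by blast
    qed
    then show ?thesis using B unfolding V'_def by blast
  qed
qed

lemma R2_le: assumes "finite B" shows "card (R 2 B) \<le> card B choose 2"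
proof -
  have "inj_on (\<lambda>(a,d). {a, a+d}) (R 2 B)"
  proof (rule inj_onI)
    fix p p' assume p: "p \<in> R 2 B" and p': "p' \<in> R 2 B" and eq: "(\<lambda>(a,d). {a, a+d}) p = (\<lambda>(a,d). {a, a+d}) p'"
    obtain a d where pd: "p = (a,d)" by (cases p)
    obtain a' d' where pd': "p' = (a',d')" by (cases p')
    have d: "d > 0" "d' > 0" using p p' pd pd' unfolding R_def by auto
    have e: "{a, a+d} = {a', a'+d'}" using eq pd pd' by simp
    then have "a = a' \<and> d = d'" using d
      by (smt (verit, ccfv_threshold) doubleton_eq_iff)
    then show "p = p'" using pd pd' by simp
  qed
  moreover have "(\<lambda>(a,d). {a, a+d}) ` (R 2 B) \<subseteq> {S. S \<subseteq> B \<and> card S = 2}"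
  proof
    fix S assume "S \<in> (\<lambda>(a,d). {a, a+d}) ` (R 2 B)"
    then obtain a d where ad: "(a,d) \<in> R 2 B" "S = {a, a+d}" by auto
    have "a \<in> B" "a + d \<in> B" "d > 0" using ad APs_mem[of 0 2 a d] APs_mem[of 1 2 a d] unfolding R_def by auto
    then show "S \<in> {S. S \<subseteq> B \<and> card S = 2}" using ad by auto
  qed
  moreover have "finite {S. S \<subseteq> B \<and> card S = 2}" using assms by simp
  ultimately have "card (R 2 B) \<le> card {S. S \<subseteq> B \<and> card S = 2}" by (rule card_inj_on_le)
  also have "\<dots> = card B choose 2" using n_subsets[OF assms] by simp
  finally show ?thesis .
qed

lemma R_split:
  assumes k: "2 \<le> k" and BV: "B \<subseteq> V" and dc: "\<forall>x\<in>B. \<forall>y\<in>V. y \<le> x \<longrightarrow> y \<in> B"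
  shows "R (Suc k) V \<subseteq> R 2 B \<union> (\<lambda>(x,d). (x - d, d)) ` R k (V - B)"
proof
  fix p assume p: "p \<in> R (Suc k) V"
  obtain a d where pd: "p = (a,d)" by (cases p)
  have d: "d > 0" and sub: "APs a d (Suc k) \<subseteq> V" using p pd unfolding R_def by auto
  have aV: "a \<in> V" and adV: "a + d \<in> V" using sub APs_mem[of 0 "Suc k" a d] APs_mem[of 1 "Suc k" a d] k by auto
  show "p \<in> R 2 B \<union> (\<lambda>(x,d). (x - d, d)) ` R k (V - B)"
  proof (cases "a + d \<in> B")
    case True
    then have "a \<in> B" using dc aV d by auto
    moreover have "APs a d 2 = {a, a + d}" unfolding APs_def
      by (auto simp: less_2_cases_iff)
    ultimately have "p \<in> R 2 B" using True pd d unfolding R_def by auto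
    then show ?thesis by simp
  next
    case False
    have "APs (a + d) d k \<subseteq> V - B"
    proof
      fix x assume "x \<in> APs (a + d) d k"
      then obtain i where i: "i < k" "x = a + d + real i * d" unfolding APs_def by auto
      have "x = a + real (Suc i) * d" using i by (simp add: algebra_simps)
      moreover have "a + real (Suc i) * d \<in> V" using sub APs_mem[of "Suc i" "Suc k" a d] i by auto
      ultimately have xV: "x \<in> V" by simp
      have "a + d \<le> x" using i d by simp
      then have "x \<notin> B" using False dc adV by auto
      then show "x \<in> V - B" using xV by simp
    qed
    then have "(a + d, d) \<in> R k (V - B)" using d unfolding R_def by simp
    then show ?thesis using pd by (auto intro!: image_eqI[of _ _ "(a+d, d)"])
  qed
qed

definition H :: "nat \<Rightarrow> nat \<Rightarrow> nat" where "H m n = (\<Sum>t<n. t div m)"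

lemma H_mult: fixes q m :: nat assumes "0 < m" shows "2 * (\<Sum>t<q*m. t div m) + m * q = m * q * q"
proof (induction q)
  case 0 then show ?case by simp
next
  case (Suc q)
  have split: "(\<Sum>t<Suc q * m. t div m) = (\<Sum>t<q*m. t div m) + (\<Sum>t\<in>{q*m..<q*m+m}. t div m)"
    by (simp add: lessThan_atLeast0 sum.atLeastLessThan_concat add.commute)
  have "(\<Sum>t\<in>{q*m..<q*m+m}. t div m) = (\<Sum>t\<in>{q*m..<q*m+m}. q)"
  proof (rule sum.cong)
    fix t assume "t \<in> {q*m..<q*m+m}"
    then show "t div m = q" by (intro div_nat_eqI) (auto simp: algebra_simps)
  qed simp
  then have "(\<Sum>t\<in>{q*m..<q*m+m}. t div m) = m * q" by simp
  with split Suc show ?case by (simp add: algebra_simps)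
qed

lemma H_closed: assumes "0 < m"
  shows "2 * H m n + m * (n div m) = m * (n div m) * (n div m) + 2 * (n div m) * (n mod m)"
proof -
  define q where "q = n div m"
  define r where "r = n mod m"
  have n: "n = q*m + r" by (simp add: q_def r_def)
  have rm: "r < m" using assms by (simp add: r_def)
  have split: "H m n = (\<Sum>t<q*m. t div m) + (\<Sum>t\<in>{q*m..<q*m+r}. t div m)"
    unfolding H_def n by (simp add: lessThan_atLeast0 sum.atLeastLessThan_concat)
  have "(\<Sum>t\<in>{q*m..<q*m+r}. t div m) = (\<Sum>t\<in>{q*m..<q*m+r}. q)"
  proof (rule sum.cong)
    fix t assume "t \<in> {q*m..<q*m+r}"
    then show "t div m = q" using rm by (intro div_nat_eqI) (auto simp: algebra_simps)
  qed simp
  then have "(\<Sum>t\<in>{q*m..<q*m+r}. t div m) = r * q" by simp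
  with split H_mult[OF assms, of q] show ?thesis
    unfolding q_def[symmetric] r_def[symmetric] by (simp add: algebra_simps)
qed

lemma H_rec: assumes "0 < m"
  shows "(((n + m) div Suc m) choose 2) + H m (n - (n + m) div Suc m) \<le> H (Suc m) n"
proof -
  define M where "M = Suc m"
  define q where "q = n div M"
  define r where "r = n mod M"
  have n: "n = q*M + r" by (simp add: q_def r_def)
  have rM: "r < M" by (simp add: r_def M_def)
  have c2: "2 * (b choose 2) + b = b * b" for b :: nat
    by (induction b) (auto simp: numeral_2_eq_2 algebra_simps)
  have HM: "2 * H M n + M * q = M * q * q + 2 * q * r"
    using H_closed[of M n] unfolding q_def r_def by (simp add: M_def)
  show ?thesis
  proof (cases "r = 0")
    case True
    have b: "(n + m) div M = q" using True M_def by (intro div_nat_eqI) (auto simp: n algebra_simps)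
    have nb: "n - q = q * m" using True by (simp add: n M_def algebra_simps)
    have dm: "(q*m) div m = q" "(q*m) mod m = 0" using assms by auto
    have Hm: "2 * H m (q*m) + m * q = m * q * q" using H_closed[OF assms, of "q*m"] dm by simp
    have "2 * ((q choose 2) + H m (q*m)) + M * q = 2 * H M n + M * q"
      using c2[of q] Hm HM True by (simp add: M_def algebra_simps)
    then show ?thesis using b nb M_def by simp
  next
    case False
    have b: "(n + m) div M = Suc q" using False rM M_def by (intro div_nat_eqI) (auto simp: n algebra_simps)
    have nb: "n - Suc q = q * m + (r - 1)" using False by (simp add: n M_def algebra_simps)
    have r1: "r - 1 < m" using rM False M_def by simp
    have dm: "(q*m + (r-1)) div m = q" using r1 by (intro div_nat_eqI) (auto simp: algebra_simps)
    have dm2: "(q*m + (r-1)) mod m = r - 1" using r1 by (simp add: mod_mult_self3)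
    have Hm: "2 * H m (q*m + (r-1)) + m * q = m * q * q + 2 * q * (r - 1)"
      using H_closed[OF assms, of "q*m + (r-1)"] dm dm2 by simp
    have "2 * ((Suc q choose 2) + H m (q*m + (r-1))) + M * q = 2 * H M n + M * q"
      using c2[of "Suc q"] Hm HM False by (cases r) (simp_all add: M_def algebra_simps)
    then show ?thesis using b nb M_def by simp
  qed
qed


lemma H_one: "H 1 n = n choose 2"
proof -
  have a: "2 * H 1 n + n = n * n" using H_closed[of 1 n] by simp
  have b: "2 * (n choose 2) + n = n * n"
    by (induction n) (auto simp: numeral_2_eq_2 algebra_simps)
  from a b show ?thesis by simp
qed

lemma upper: "0 < m \<Longrightarrow> finite V \<Longrightarrow> card (R (Suc m) V) \<le> H m (card V)"
proof (induction m arbitrary: V rule: nat_induct_non_zero)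
  case 1
  then show ?case using R2_le[of V] H_one by (simp add: numeral_2_eq_2)
next
  case (Suc m)
  define n where "n = card V"
  define b where "b = (n + m) div Suc m"
  have "n + m < Suc n * Suc m" by simp
  then have "b < Suc n" unfolding b_def by (rule less_mult_imp_div_less)
  then have bn: "b \<le> card V" unfolding n_def by simp
  obtain B where B: "B \<subseteq> V" "card B = b" "\<forall>x\<in>B. \<forall>y\<in>V. y \<le> x \<longrightarrow> y \<in> B"
    using down_closed[OF Suc.prems bn] by blast
  have fB: "finite B" using B Suc.prems finite_subset by blast
  have fW: "finite (V - B)" using Suc.prems by simp
  have cW: "card (V - B) = n - b" using B Suc.prems n_def by (simp add: card_Diff_subset fB)
  have k2: "2 \<le> Suc m" using Suc.hyps by simp
  have fin: "finite (R 2 B \<union> (\<lambda>(x,d). (x - d, d)) ` R (Suc m) (V - B))"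
    using R_finite[of 2 B] R_finite[OF k2 fW] fB by simp
  have "card (R (Suc (Suc m)) V) \<le> card (R 2 B \<union> (\<lambda>(x,d). (x - d, d)) ` R (Suc m) (V - B))"
    using R_split[OF k2 B(1) B(3)] fin by (rule card_mono[rotated])
  also have "\<dots> \<le> card (R 2 B) + card ((\<lambda>(x,d). (x - d, d)) ` R (Suc m) (V - B))"
    by (rule card_Un_le)
  also have "\<dots> \<le> card (R 2 B) + card (R (Suc m) (V - B))"
    using card_image_le[OF R_finite[OF k2 fW]] by simp
  also have "\<dots> \<le> (b choose 2) + H m (n - b)"
    using R2_le[OF fB] B(2) Suc.IH[OF fW] cW by simp
  also have "\<dots> \<le> H (Suc m) n" unfolding b_def by (rule H_rec[OF Suc.hyps])
  finally show ?case unfolding n_def .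
qed

lemma R_mono: "V \<subseteq> W \<Longrightarrow> R k V \<subseteq> R k W"
  unfolding R_def by auto

lemma lower: "0 < m \<Longrightarrow> H m n \<le> card (R (Suc m) (real ` {0..<n}))"
proof (induction n)
  case 0 then show ?case by (simp add: H_def)
next
  case (Suc n)
  define V0 where "V0 = real ` {0..<n}"
  define V1 where "V1 = real ` {0..<Suc n}"
  define New where "New = (\<lambda>d::nat. (real n - real m * real d, real d)) ` {1..n div m}"
  have k2: "2 \<le> Suc m" using Suc.prems by simp
  have f1: "finite (R (Suc m) V1)" using R_finite[OF k2] unfolding V1_def by simp
  have sub0: "R (Suc m) V0 \<subseteq> R (Suc m) V1" unfolding V0_def V1_def by (rule R_mono) auto
  have subN: "New \<subseteq> R (Suc m) V1"
  proof
    fix p assume "p \<in> New"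
    then obtain d where d: "d \<in> {1..n div m}" "p = (real n - real m * real d, real d)" unfolding New_def by auto
    have md: "m * d \<le> n" using d(1)
      by (meson atLeastAtMost_iff dual_order.trans mult_le_mono2 times_div_less_eq_dividend)
    have "APs (real n - real m * real d) (real d) (Suc m) \<subseteq> V1"
    proof
      fix x assume "x \<in> APs (real n - real m * real d) (real d) (Suc m)"
      then obtain i where i: "i < Suc m" "x = real n - real m * real d + real i * real d" unfolding APs_def by auto
      have le: "(m - i) * d \<le> n" using md i by (meson diff_le_self le_trans mult_le_mono1)
      have "real (n - (m - i) * d) = real n - (real m - real i) * real d"
        using le i by (simp add: of_nat_diff)
      then have "x = real (n - (m - i) * d)" using i by (simp add: algebra_simps)
      then show "x \<in> V1" unfolding V1_def by auto
    qed
    then show "p \<in> R (Suc m) V1" using d unfolding R_def by auto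
  qed
  have disj: "R (Suc m) V0 \<inter> New = {}"
  proof (rule ccontr)
    assume "R (Suc m) V0 \<inter> New \<noteq> {}"
    then obtain d where d: "(real n - real m * real d, real d) \<in> R (Suc m) V0" unfolding New_def by auto
    then have "real n - real m * real d + real m * real d \<in> V0"
      using APs_mem[of m "Suc m" "real n - real m * real d" "real d"] unfolding R_def by auto
    then show False unfolding V0_def by auto
  qed
  have cN: "card New = n div m"
  proof -
    have "inj_on (\<lambda>d::nat. (real n - real m * real d, real d)) {1..n div m}" by (rule inj_onI) auto
    then show ?thesis unfolding New_def by (simp add: card_image)
  qed
  have "H m (Suc n) = H m n + n div m" by (simp add: H_def)
  also have "\<dots> \<le> card (R (Suc m) V0) + card New" using Suc cN V0_def by simp
  also have "\<dots> = card (R (Suc m) V0 \<union> New)"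
    using disj f1 sub0 subN by (simp add: card_Un_disjoint finite_subset)
  also have "\<dots> \<le> card (R (Suc m) V1)" using sub0 subN f1 by (intro card_mono) auto
  finally show ?case unfolding V1_def .
qed

theorem theorem2:
  fixes k n :: nat
  assumes "k > 1" and "n > 0"
  defines "r \<equiv> n mod (k - 1)"
  shows "real (S_AP k n) = (real n - real r) * (real n + real r - real k + 1) / (2 * real k - 2)"
proof -
  define m where "m = k - 1"
  have m0: "0 < m" and km: "k = Suc m" using assms(1) unfolding m_def by auto
  have k2: "2 \<le> k" using assms(1) by simp
  define X where "X = {S_AP_set k V | V. finite V \<and> card V = n}"
  have le: "\<forall>y\<in>X. y \<le> H m n"
    unfolding X_def using upper[OF m0] S_AP_set_eq[OF k2] km by auto
  define V0 where "V0 = real ` {0..<n}"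
  have cV0: "card V0 = n" unfolding V0_def by (simp add: card_image inj_on_def)
  have fV0: "finite V0" unfolding V0_def by simp
  have "S_AP_set k V0 = H m n"
    using upper[OF m0 fV0] lower[OF m0, of n] S_AP_set_eq[OF k2] km cV0 V0_def by simp
  then have "H m n = S_AP_set k V0 \<and> finite V0 \<and> card V0 = n" using cV0 fV0 by simp
  then have mem: "H m n \<in> X" unfolding X_def by blast
  have fX: "finite X" using le by (meson finite_atMost finite_subset atMost_iff subsetI)
  have SH: "S_AP k n = H m n" unfolding S_AP_def X_def[symmetric]
    using fX le mem by (intro Max_eqI) auto
  define q where "q = n div m"
  have rr: "r = n mod m" unfolding r_def m_def ..
  have e: "2 * H m n + m * q = m * q * q + 2 * q * r" using H_closed[OF m0, of n] unfolding q_def rr by simp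
  have e': "2 * real (H m n) + real m * real q = real m * real q * real q + 2 * real q * real r"
    using arg_cong[OF e, of real] by simp
  have nq: "real n = real q * real m + real r" unfolding q_def rr
    by (metis of_nat_add of_nat_mult div_mult_mod_eq)
  have rk: "real k = real m + 1" using km by simp
  have "real (H m n) = (real m * real q * real q + 2 * real q * real r - real m * real q) / 2"
    using e' by simp
  also have "\<dots> = (real n - real r) * (real n + real r - real k + 1) / (2 * real k - 2)"
    using m0 unfolding nq rk by (simp add: field_simps)
  finally show ?thesis using SH by simp
qed

end
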